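(* Let $M \ge 1$ be an integer, let $d>0$ be the antenna element spacing and $\lambda>0$ the wavelength of an $M$-element one-dimensional uniform linear array, and let $\mathcal{T}$ be a (measurable) set of possible angles of departure. Put $$\mathcal{P} = \left\{ \psi : \psi = 2\pi \tfrac{d}{\lambda}\sin(\theta),\ \theta\in\mathcal{T}\right\}, \qquad \mu(\mathcal{P}) = \int_{-\pi}^{\pi} \mathbf{1}(\psi\in\mathcal{P})\, d\psi ,$$ and let the array manifold be $\mathcal{A}=\{\mathbf{a}(\psi):\psi\in\mathcal{P}\}$ with $\mathbf{a}(\psi) = [1,\ e^{j\psi},\ \ldots,\ e^{j(M-1)\psi}]^T\in\mathbb{C}^M$. Let $\mathcal{F}_k=\{\mathbf{f}_1,\ldots,\mathbf{f}_{N_k}\}\subset\mathbb{C}^M$ be any codebook of $N_k$ unit-norm vectors (in particular, any subcodebook of analog beamformers whose entries are $\frac{1}{\sqrt M}e^{j\varphi_m}$ with quantized phases $\varphi_m$). Define $$\chi(\mathcal{F}_k) = \inf_{\mathbf{a}\in\mathcal{A}}\ \max_{\mathbf{f}\in\mathcal{F}_k} |\mathbf{f}^*\mathbf{a}|^2 ,$$ where, in computing the infimum, only $\psi\in\mathcal{P}\cap[-\pi,\pi]$ are considered. Then $$\chi(\mathcal{F}_k) \le \min\left( \frac{2\pi N_k}{\mu(\mathcal{P})},\ M\right),$$ with the convention $2\pi N_k/0=+\infty$.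
   Context: $\mathbf{f}^*$ denotes the conjugate transpose of $\mathbf{f}$, $\|\cdot\|$ the Euclidean norm, $j=\sqrt{-1}$, and $\mathbf{1}(\cdot)$ the indicator function. The quantity $\chi(\mathcal{F}_k)$ is the smallest (worst-case over directions in the array manifold) beamforming gain achievable by the best codeword of $\mathcal{F}_k$; the associated covering distance is $\delta(\mathcal{F}_k)=\sqrt{1-\chi(\mathcal{F}_k)/M}$. *)

theory Defs
  imports "HOL-Analysis.Analysis"
begin

text \<open>Vectors in C^M are represented as functions nat => complex, only indices m < M matter.\<close>

definition steer :: "nat \<Rightarrow> real \<Rightarrow> nat \<Rightarrow> complex" where
  "steer M \<psi> m = (if m < M then exp (\<i> * of_nat m * complex_of_real \<psi>) else 0)"

definition herm_inner :: "nat \<Rightarrow> (nat \<Rightarrow> complex) \<Rightarrow> (nat \<Rightarrow> complex) \<Rightarrow> complex" where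
  "herm_inner M f a = (\<Sum>m<M. cnj (f m) * a m)"

definition vnorm :: "nat \<Rightarrow> (nat \<Rightarrow> complex) \<Rightarrow> real" where
  "vnorm M f = sqrt (\<Sum>m<M. (cmod (f m))\<^sup>2)"

definition phase_set :: "real \<Rightarrow> real \<Rightarrow> real set \<Rightarrow> real set" where
  "phase_set d lam T = {\<psi>. \<exists>\<theta>\<in>T. \<psi> = 2 * pi * (d / lam) * sin \<theta>}"

definition mu_P :: "real set \<Rightarrow> real" where
  "mu_P P = measure lebesgue (P \<inter> {-pi..pi})"

definition chi :: "nat \<Rightarrow> real set \<Rightarrow> nat \<Rightarrow> (nat \<Rightarrow> nat \<Rightarrow> complex) \<Rightarrow> real" where
  "chi M P N f = Inf ((\<lambda>\<psi>. Max ((\<lambda>k. (cmod (herm_inner M (f k) (steer M \<psi>)))\<^sup>2) ` {..<N}))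
                      ` (P \<inter> {-pi..pi}))"

end

theory Submission imports Defs begin
lemma exp_int_integral:
  fixes j :: int
  shows "((\<lambda>x::real. exp (\<i> * of_int j * complex_of_real x)) has_integral
           (if j = 0 then complex_of_real (2*pi) else 0)) {-pi..pi}"
proof (cases "j = 0")
  case True
  then show ?thesis using has_integral_const_real[of "1::complex" "-pi" pi]
    by (simp add: scaleR_conv_of_real)
next
  case False
  let ?G = "\<lambda>z::complex. exp (\<i> * of_int j * z) / (\<i> * of_int j)"
  have d: "(?G has_field_derivative exp (\<i> * of_int j * z)) (at z)" for z
    using False by (auto intro!: derivative_eq_intros simp: field_simps)
  have "((\<lambda>x::real. exp (\<i> * of_int j * complex_of_real x)) has_integral
           (?G (of_real pi) - ?G (of_real (-pi)))) {-pi..pi}"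
    by (rule fundamental_theorem_of_calculus) (auto intro!: has_vector_derivative_real_field d)
  moreover have "exp (\<i> * of_int j * complex_of_real pi) = exp (\<i> * of_int j * complex_of_real (-pi))"
    unfolding exp_eq by (rule exI[of _ j]) (simp add: algebra_simps)
  ultimately show ?thesis using False by simp
qed
lemma parseval:
  fixes c :: "nat \<Rightarrow> complex"
  shows "((\<lambda>x::real. (cmod (\<Sum>m<M. c m * exp (\<i> * of_nat m * complex_of_real x)))\<^sup>2) has_integral
           2 * pi * (\<Sum>m<M. (cmod (c m))\<^sup>2)) {-pi..pi}"
proof -
  let ?E = "\<lambda>j x. exp (\<i> * of_int j * complex_of_real x)"
  have eq: "complex_of_real ((cmod (\<Sum>m<M. c m * exp (\<i> * of_nat m * complex_of_real x)))\<^sup>2)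
      = (\<Sum>m<M. \<Sum>n<M. (c m * cnj (c n)) * ?E (int m - int n) x)" for x
  proof -
    have e: "exp (\<i> * of_nat m * complex_of_real x) * cnj (exp (\<i> * of_nat n * complex_of_real x))
          = ?E (int m - int n) x" for m n
      by (simp add: exp_cnj exp_add[symmetric] algebra_simps)
    have "complex_of_real ((cmod (\<Sum>m<M. c m * exp (\<i> * of_nat m * complex_of_real x)))\<^sup>2)
        = (\<Sum>m<M. c m * exp (\<i> * of_nat m * complex_of_real x)) * cnj (\<Sum>m<M. c m * exp (\<i> * of_nat m * complex_of_real x))"
      by (rule complex_norm_square)
    also have "\<dots> = (\<Sum>m<M. \<Sum>n<M. (c m * cnj (c n)) * (exp (\<i> * of_nat m * complex_of_real x) * cnj (exp (\<i> * of_nat n * complex_of_real x))))"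
      by (simp add: sum_distrib_left sum_distrib_right cnj_sum algebra_simps) (rule sum.swap)
    finally show ?thesis by (simp add: e)
  qed
  have "((\<lambda>x. \<Sum>m<M. \<Sum>n<M. (c m * cnj (c n)) * ?E (int m - int n) x) has_integral
        (\<Sum>m<M. \<Sum>n<M. (c m * cnj (c n)) * (if int m - int n = 0 then complex_of_real (2*pi) else 0))) {-pi..pi}"
    by (intro has_integral_sum finite_lessThan has_integral_mult_right exp_int_integral)
  also have "(\<Sum>m<M. \<Sum>n<M. (c m * cnj (c n)) * (if int m - int n = 0 then complex_of_real (2*pi) else 0))
      = (\<Sum>m<M. (c m * cnj (c m)) * complex_of_real (2*pi))"
    by (simp add: if_distrib[where f="\<lambda>t. _ * t"] sum.delta cong: if_cong)
  also have "\<dots> = (\<Sum>m<M. complex_of_real ((cmod (c m))\<^sup>2) * complex_of_real (2*pi))"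
    by (intro sum.cong refl) (simp only: complex_norm_square)
  also have "\<dots> = complex_of_real (2 * pi * (\<Sum>m<M. (cmod (c m))\<^sup>2))"
    by (simp only: of_real_sum[symmetric] of_real_mult[symmetric] sum_distrib_left mult.commute)
  finally have "((\<lambda>x. complex_of_real ((cmod (\<Sum>m<M. c m * exp (\<i> * of_nat m * complex_of_real x)))\<^sup>2)) has_integral
        complex_of_real (2 * pi * (\<Sum>m<M. (cmod (c m))\<^sup>2))) {-pi..pi}"
    by (simp only: eq)
  from has_integral_Re[OF this] show ?thesis by simp
qed

lemma herm_steer:
  "herm_inner M g (steer M \<psi>) = (\<Sum>m<M. cnj (g m) * exp (\<i> * of_nat m * complex_of_real \<psi>))"
  unfolding herm_inner_def steer_def by (intro sum.cong) auto

lemma pointwise_bound: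
  assumes "vnorm M g = 1"
  shows "(cmod (herm_inner M g (steer M \<psi>)))\<^sup>2 \<le> real M"
proof -
  have s1: "(\<Sum>m<M. (cmod (g m))\<^sup>2) = 1"
    using assms unfolding vnorm_def by (metis real_sqrt_eq_1_iff)
  have "cmod (herm_inner M g (steer M \<psi>)) \<le> (\<Sum>m<M. cmod (cnj (g m) * exp (\<i> * of_nat m * complex_of_real \<psi>)))"
    unfolding herm_steer by (rule norm_sum)
  also have "\<dots> = (\<Sum>m<M. cmod (g m) * 1)"
  proof (intro sum.cong refl)
    fix m
    have "cmod (exp (\<i> * of_nat m * complex_of_real \<psi>)) = 1"
      by (simp add: norm_exp_eq_Re)
    then show "cmod (cnj (g m) * exp (\<i> * of_nat m * complex_of_real \<psi>)) = cmod (g m) * 1"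
      by (simp add: norm_mult)
  qed
  finally have a: "cmod (herm_inner M g (steer M \<psi>)) \<le> (\<Sum>m<M. cmod (g m) * 1)" .
  have "(cmod (herm_inner M g (steer M \<psi>)))\<^sup>2 \<le> (\<Sum>m<M. cmod (g m) * 1)\<^sup>2"
    using a by (intro power_mono) auto
  also have "\<dots> \<le> (\<Sum>m<M. (cmod (g m))\<^sup>2) * (\<Sum>m<M. (1::real)\<^sup>2)"
    by (rule Cauchy_Schwarz_ineq_sum)
  also have "\<dots> = real M" using s1 by simp
  finally show ?thesis .
qed

lemma parseval_k:
  assumes "vnorm M g = 1"
  shows "((\<lambda>\<psi>. (cmod (herm_inner M g (steer M \<psi>)))\<^sup>2) has_integral 2 * pi) {-pi..pi}"
proof -
  have s0: "(\<Sum>m<M. (cmod (g m))\<^sup>2) = 1"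
    using assms unfolding vnorm_def by (metis real_sqrt_eq_1_iff)
  have s1: "(\<Sum>m<M. (cmod (cnj (g m)))\<^sup>2) = 1"
    using s0 by (simp only: complex_mod_cnj)
  have "((\<lambda>\<psi>. (cmod (\<Sum>m<M. cnj (g m) * exp (\<i> * of_nat m * complex_of_real \<psi>)))\<^sup>2) has_integral 2 * pi * 1) {-pi..pi}"
    using parseval[of "\<lambda>m. cnj (g m)" M] by (simp only: s1)
  then show ?thesis by (simp only: herm_steer mult_1_right)
qed

theorem lemma1:
  fixes M N :: nat and d lam :: real and T :: "real set" and f :: "nat \<Rightarrow> nat \<Rightarrow> complex"
  assumes "M \<ge> 1" and "d > 0" and "lam > 0"
    and "T \<in> sets lebesgue"
    and "N \<ge> 1"
    and "\<And>k. k < N \<Longrightarrow> vnorm M (f k) = 1"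
    and "phase_set d lam T \<inter> {-pi..pi} \<noteq> {}"
  shows "ereal (chi M (phase_set d lam T) N f)
           \<le> min (if mu_P (phase_set d lam T) = 0 then \<infinity>
                   else ereal (2 * pi * real N / mu_P (phase_set d lam T)))
                  (ereal (real M))"
proof -
  define P where "P = phase_set d lam T"
  define S where "S = P \<inter> {-pi..pi}"
  define h where "h = (\<lambda>k \<psi>. (cmod (herm_inner M (f k) (steer M \<psi>)))\<^sup>2)"
  define g where "g = (\<lambda>\<psi>. Max ((\<lambda>k. h k \<psi>) ` {..<N}))"
  define H where "H = (\<lambda>\<psi>. \<Sum>k<N. h k \<psi>)"
  have chi_eq: "chi M P N f = Inf (g ` S)"
    unfolding chi_def g_def h_def S_def ..
  have ne: "{..<N} \<noteq> {}" using assms(5) by (simp add: lessThan_empty_iff)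
  have g_nn: "0 \<le> g \<psi>" for \<psi>
  proof -
    have "h 0 \<psi> \<le> g \<psi>" unfolding g_def using assms(5) by (intro Max_ge) auto
    moreover have "0 \<le> h 0 \<psi>" by (simp add: h_def)
    ultimately show ?thesis by linarith
  qed
  have g_le_H: "g \<psi> \<le> H \<psi>" for \<psi>
    unfolding g_def H_def using ne
    by (auto simp: Max_le_iff h_def intro!: member_le_sum)
  have g_le_M: "g \<psi> \<le> real M" for \<psi>
    unfolding g_def h_def using ne by (auto simp: Max_le_iff intro!: pointwise_bound assms(6))
  have bdd: "bdd_below (g ` S)" unfolding bdd_below_def using g_nn by blast
  have chi_le: "chi M P N f \<le> g \<psi>" if "\<psi> \<in> S" for \<psi>
    unfolding chi_eq using bdd that by (auto intro: cInf_lower)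
  obtain \<psi>0 where "\<psi>0 \<in> S" using assms(7) unfolding S_def P_def by blast
  hence chiM: "chi M P N f \<le> real M" using chi_le g_le_M by (meson order_trans)
  show ?thesis
  proof (cases "mu_P P = 0")
    case True
    then show ?thesis using chiM unfolding P_def by simp
  next
    case False
    have muS: "mu_P P = measure lebesgue S" unfolding mu_P_def S_def ..
    have Sl: "S \<in> sets lebesgue" using False muS measure_notin_sets by metis
    have Ssub: "S \<subseteq> {-pi..pi}" unfolding S_def by auto
    have Sm: "S \<in> lmeasurable"
      by (rule bounded_set_imp_lmeasurable[OF bounded_subset[OF bounded_closed_interval Ssub] Sl])
    have mupos: "mu_P P > 0" using False muS by (simp add: less_le)
    have contH: "continuous_on {-pi..pi} H"
      unfolding H_def h_def herm_steer by (intro continuous_intros)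
    have HI: "(H has_integral (\<Sum>k<N. 2 * pi)) {-pi..pi}"
      unfolding H_def h_def by (intro has_integral_sum finite_lessThan parseval_k assms(6)) auto
    have Habs: "H absolutely_integrable_on {-pi..pi}"
      by (rule absolutely_integrable_continuous_real[OF contH])
    have HabsS: "H absolutely_integrable_on S"
      by (rule set_integrable_subset[OF Habs Sl Ssub])
    have HS: "H integrable_on S" using HabsS absolutely_integrable_on_def by blast
    have "chi M P N f * mu_P P = integral S (\<lambda>x. chi M P N f * 1)"
      by (simp only: muS lmeasure_integral[OF Sm] integral_mult_right)
    also have "\<dots> \<le> integral S H"
      using chi_le g_le_H
      by (intro integral_le integrable_on_const[OF Sm] HS) (auto intro: order_trans)
    also have "\<dots> \<le> integral {-pi..pi} H"
      using g_nn g_le_H has_integral_integrable[OF HI]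
      by (intro integral_subset_le Ssub HS) (auto intro: order_trans)
    also have "\<dots> = 2 * pi * real N"
      using HI by (simp add: integral_unique)
    finally have "chi M P N f \<le> 2 * pi * real N / mu_P P"
      using mupos by (simp add: pos_le_divide_eq)
    then show ?thesis using chiM False unfolding P_def by simp
  qed
qed

end
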